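(* Let $\mathbb{T}_S$ be a spherically symmetric tree with origin $\mathcal{O}$, and consider the cone percolation process on $\mathbb{T}_S$ with radius of influence $R$ satisfying $\mathbb{P}(R\le k)=1$ for some $k\in\mathbb{N}$. If $$\dim\inf\partial\mathbb{T}_S > \ln\Big[\frac{1}{1-\prod_{j=1}^k\mathbb{P}(R<j)}\Big],$$ then $\mathbb{P}(V)>0$.
   Context: Cone percolation process: Let $\mathbb{T}$ be a tree with origin $\mathcal{O}$ and graph distance $d(\cdot,\cdot)$. Write $u\le v$ if $u$ lies on the path from $\mathcal{O}$ to $v$. Let $R$ be a random variable with values in $\{0,1,2,\dots\}$, $p_k=\mathbb{P}(R=k)$, and assume $p_0\in(0,1)$. Let $\{R_v\}$ be i.i.d. copies of $R$ indexed by the vertices. For each vertex $u$ let $B_u=\{v: u\le v,\ d(u,v)\le R_u\}$. Set $I_0=\{\mathcal{O}\}$, $I_{n+1}=\bigcup_{u\in I_n}B_u$, $I=\bigcup_n I_n$; survival is the event $V=\{|I|=\infty\}$. A tree is spherically symmetric if any two vertices at the same distance from $\mathcal{O}$ have the same degree. For a vertex $u$ and $n\ge1$, $M_n(u)=|\{v: u\le v,\ d(v,\mathcal{O})=d(u,\mathcal{O})+n\}|$, and $\dim\inf\partial\mathbb{T}:=\lim_{n\to\infty}\min_{v}\frac1n\ln M_n(v)$ (assumed to exist). *)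

theory Defs
  imports "HOL-Probability.Probability" "HOL-Library.Sublist"
begin

text \<open>Trees are represented in Ulam--Harris form: vertices are finite lists of
naturals, the origin is the empty list, the parent of xs@[i] is xs.
The order u \<le> v (u on the path from the origin to v) is prefix u v, and for
u \<le> v the graph distance is length v - length u.\<close>

definition rooted_tree :: "nat list set \<Rightarrow> bool" where
  "rooted_tree T \<longleftrightarrow> [] \<in> T \<and> (\<forall>v\<in>T. \<forall>u. prefix u v \<longrightarrow> u \<in> T)
     \<and> (\<forall>u\<in>T. finite {v\<in>T. \<exists>i. v = u @ [i]})"

definition tree_degree :: "nat list set \<Rightarrow> nat list \<Rightarrow> nat" where
  "tree_degree T u = card {v\<in>T. \<exists>i. v = u @ [i]} + (if u = [] then 0 else 1)"

definition spherically_symmetric :: "nat list set \<Rightarrow> bool" where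
  "spherically_symmetric T \<longleftrightarrow>
     (\<forall>u\<in>T. \<forall>v\<in>T. length u = length v \<longrightarrow> tree_degree T u = tree_degree T v)"

definition Mdesc :: "nat list set \<Rightarrow> nat \<Rightarrow> nat list \<Rightarrow> nat" where
  "Mdesc T n u = card {v\<in>T. prefix u v \<and> length v = length u + n}"

definition lnE :: "nat \<Rightarrow> ereal" where
  "lnE m = (if m = 0 then - \<infinity> else ereal (ln (real m)))"

text \<open>The sequence min_v (1/n) ln M_n(v), whose limit is dim inf of the boundary.\<close>
definition dim_inf_seq :: "nat list set \<Rightarrow> nat \<Rightarrow> ereal" where
  "dim_inf_seq T n = (INF v\<in>T. lnE (Mdesc T n v) / ereal (real n))"

text \<open>Cone percolation cluster I for a given realisation r of the radii:
  I is the union of the I_n, I_0 = {origin}, I_{n+1} = union of B_u over u in I_n,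
  B_u = {v. u \<le> v, d(u,v) \<le> r u}.\<close>
inductive_set cone_cluster :: "nat list set \<Rightarrow> (nat list \<Rightarrow> nat) \<Rightarrow> nat list set"
  for T r where
  origin: "[] \<in> cone_cluster T r"
| spread: "u \<in> cone_cluster T r \<Longrightarrow> v \<in> T \<Longrightarrow> prefix u v \<Longrightarrow>
           length v - length u \<le> r u \<Longrightarrow> v \<in> cone_cluster T r"

end

theory Submission
  imports Defs
begin


fun sig :: "(nat \<Rightarrow> nat) \<Rightarrow> nat \<Rightarrow> nat" where
  "sig x 0 = 0"
| "sig x (Suc n) = max (sig x n - 1) (x n)"

definition OPN :: "nat \<Rightarrow> (nat \<Rightarrow> nat) \<Rightarrow> bool" where
  "OPN n x \<longleftrightarrow> (\<forall>i\<in>{1..n}. 1 \<le> sig x i)"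

lemma sig_ge: "1 \<le> c \<Longrightarrow> c \<le> sig x i \<longleftrightarrow> (\<exists>j<i. c + (i - 1 - j) \<le> x j)"
proof (induction i arbitrary: c)
  case 0 then show ?case by simp
next
  case (Suc n)
  have "c \<le> sig x (Suc n) \<longleftrightarrow> c + 1 \<le> sig x n \<or> c \<le> x n" using Suc.prems by auto
  also have "\<dots> \<longleftrightarrow> (\<exists>j<n. c + 1 + (n - 1 - j) \<le> x j) \<or> c \<le> x n" using Suc.IH[of "c+1"] by simp
  also have "\<dots> \<longleftrightarrow> (\<exists>j<Suc n. c + (Suc n - 1 - j) \<le> x j)"
    by (auto simp: less_Suc_eq)
  finally show ?case .
qed

lemma sig_cong: "(\<And>j. j < i \<Longrightarrow> x j = y j) \<Longrightarrow> sig x i = sig y i"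
  by (induction i) auto

lemma OPN_cong: "(\<And>j. j < n \<Longrightarrow> x j = y j) \<Longrightarrow> OPN n x = OPN n y"
  unfolding OPN_def by (auto intro!: ball_cong simp: sig_cong[of _ x y])

lemma OPN_iff: "OPN n x \<longleftrightarrow> (\<forall>i\<in>{1..n}. \<exists>j<i. i - j \<le> x j)"
  unfolding OPN_def
  apply (intro ball_cong refl)
  apply (subst sig_ge) apply simp
  apply (intro ex_cong1) by auto



lemma meas_finPi:
  fixes g :: "('i \<Rightarrow> nat) \<Rightarrow> bool"
  assumes K: "finite K"
  shows "g \<in> measurable (PiM K (\<lambda>_. count_space UNIV)) (count_space UNIV)"
proof (subst measurable_count_space_eq2_countable, intro conjI ballI)
  show "g \<in> space (PiM K (\<lambda>_. count_space UNIV)) \<rightarrow> UNIV" by simp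
  fix a :: bool
  let ?S = "g -` {a} \<inter> space (PiM K (\<lambda>_. count_space (UNIV::nat set)))"
  have cnt: "countable (space (PiM K (\<lambda>_. count_space (UNIV::nat set))))"
    unfolding space_PiM by (auto intro!: countable_PiE K)
  have sing: "PiE K (\<lambda>i. {x i}) = {x}" if "x \<in> ?S" for x
  proof -
    have "x \<in> extensional K" using that by (auto simp: space_PiM PiE_def)
    then have "y = x" if "y \<in> PiE K (\<lambda>i. {x i})" for y
    proof (intro ext)
      fix i show "y i = x i" using that \<open>x \<in> extensional K\<close>
        by (cases "i \<in> K") (auto simp: PiE_def extensional_def)
    qed
    moreover have "x \<in> PiE K (\<lambda>i. {x i})" using \<open>x \<in> extensional K\<close> by (auto simp: PiE_def)
    ultimately show ?thesis by blast
  qed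
  have eq: "?S = (\<Union>x\<in>?S. PiE K (\<lambda>i. {x i}))"
    using sing by auto
  have "(\<Union>x\<in>?S. PiE K (\<lambda>i. {x i})) \<in> sets (PiM K (\<lambda>_. count_space (UNIV::nat set)))"
    by (intro sets.countable_UN' countable_subset[OF _ cnt]) (auto intro!: sets_PiM_I_finite K)
  with eq show "?S \<in> sets (PiM K (\<lambda>_. count_space UNIV))" by simp
qed

context prob_space begin

lemma indep_blocks:
  fixes X :: "'i \<Rightarrow> 'a \<Rightarrow> nat" and K :: "'j \<Rightarrow> 'i set" and g :: "'j \<Rightarrow> ('i \<Rightarrow> nat) \<Rightarrow> bool"
  assumes ind: "indep_vars (\<lambda>_. count_space UNIV) X I"
    and B: "finite B" "B \<noteq> {}"
    and K: "\<And>b. b \<in> B \<Longrightarrow> finite (K b) \<and> K b \<subseteq> I"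
    and dis: "disjoint_family_on K B"
    and loc: "\<And>b f f'. b \<in> B \<Longrightarrow> (\<And>i. i \<in> K b \<Longrightarrow> f i = f' i) \<Longrightarrow> g b f = g b f'"
  shows "prob (\<Inter>b\<in>B. {\<omega>\<in>space M. g b (\<lambda>i. X i \<omega>)}) = (\<Prod>b\<in>B. prob {\<omega>\<in>space M. g b (\<lambda>i. X i \<omega>)})"
proof -
  have i1: "indep_vars (\<lambda>b. PiM (K b) (\<lambda>_. count_space UNIV)) (\<lambda>b \<omega>. restrict (\<lambda>i. X i \<omega>) (K b)) B"
    by (rule indep_vars_restrict[OF ind]) (use K dis in auto)
  have i2: "indep_vars (\<lambda>_. count_space UNIV) (\<lambda>b \<omega>. g b (restrict (\<lambda>i. X i \<omega>) (K b))) B"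
    by (rule indep_vars_compose2[OF i1]) (use K in \<open>auto intro!: meas_finPi\<close>)
  have eqg: "g b (restrict (\<lambda>i. X i \<omega>) (K b)) = g b (\<lambda>i. X i \<omega>)" if "b \<in> B" for b \<omega>
    by (rule loc[OF that]) auto
  have "prob (\<Inter>b\<in>B. (\<lambda>\<omega>. g b (restrict (\<lambda>i. X i \<omega>) (K b))) -` {True} \<inter> space M)
     = (\<Prod>b\<in>B. prob ((\<lambda>\<omega>. g b (restrict (\<lambda>i. X i \<omega>) (K b))) -` {True} \<inter> space M))"
    by (rule indep_varsD[OF i2]) (use B in auto)
  moreover have "(\<Inter>b\<in>B. (\<lambda>\<omega>. g b (restrict (\<lambda>i. X i \<omega>) (K b))) -` {True} \<inter> space M)
       = (\<Inter>b\<in>B. {\<omega>\<in>space M. g b (\<lambda>i. X i \<omega>)})"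
    using eqg by auto
  moreover have "\<And>b. b \<in> B \<Longrightarrow> (\<lambda>\<omega>. g b (restrict (\<lambda>i. X i \<omega>) (K b))) -` {True} \<inter> space M
       = {\<omega>\<in>space M. g b (\<lambda>i. X i \<omega>)}"
    using eqg by auto
  ultimately show ?thesis by (metis (no_types, lifting) prod.cong)
qed

lemma ev_meas:
  fixes X :: "'i \<Rightarrow> 'a \<Rightarrow> nat" and g :: "('i \<Rightarrow> nat) \<Rightarrow> bool"
  assumes ind: "indep_vars (\<lambda>_. count_space UNIV) X I"
    and K: "finite K" "K \<subseteq> I"
    and loc: "\<And>f f'. (\<And>i. i \<in> K \<Longrightarrow> f i = f' i) \<Longrightarrow> g f = g f'"
  shows "{\<omega>\<in>space M. g (\<lambda>i. X i \<omega>)} \<in> events"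
proof -
  have m: "(\<lambda>\<omega>. restrict (\<lambda>i. X i \<omega>) K) \<in> measurable M (PiM K (\<lambda>_. count_space UNIV))"
    using ind K by (auto simp: indep_vars_def intro!: measurable_restrict)
  have "(\<lambda>\<omega>. g (restrict (\<lambda>i. X i \<omega>) K)) \<in> measurable M (count_space UNIV)"
    by (rule measurable_compose[OF m meas_finPi[OF K(1)]])
  then have "{\<omega>\<in>space M. g (restrict (\<lambda>i. X i \<omega>) K)} \<in> events"
    by (simp add: pred_def[symmetric])
  moreover have "\<And>\<omega>. g (restrict (\<lambda>i. X i \<omega>) K) = g (\<lambda>i. X i \<omega>)"
    by (rule loc) auto
  ultimately show ?thesis by simp
qed

lemma indep_vars_reindex:
  fixes X :: "'i \<Rightarrow> 'a \<Rightarrow> nat"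
  assumes ind: "indep_vars (\<lambda>_. count_space UNIV) X I"
    and u: "inj_on u J" "u ` J \<subseteq> I"
  shows "indep_vars (\<lambda>_. count_space UNIV) (\<lambda>j. X (u j)) J"
proof -
  have i1: "indep_vars (\<lambda>j. PiM {u j} (\<lambda>_. count_space UNIV)) (\<lambda>j \<omega>. restrict (\<lambda>i. X i \<omega>) {u j}) J"
    by (rule indep_vars_restrict[OF ind]) (use u in \<open>auto simp: disjoint_family_on_def inj_on_def\<close>)
  have i2: "indep_vars (\<lambda>_. count_space UNIV) (\<lambda>j \<omega>. (restrict (\<lambda>i. X i \<omega>) {u j}) (u j)) J"
    by (rule indep_vars_compose2[OF i1]) (auto intro: measurable_component_singleton)
  then show ?thesis by simp
qed

end


context prob_space begin

lemma path_open_lb: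
  fixes X :: "nat \<Rightarrow> 'a \<Rightarrow> nat" and p :: "nat pmf"
  assumes ind: "indep_vars (\<lambda>_. count_space UNIV) X {..<L}"
    and dist: "\<And>i. i < L \<Longrightarrow> distr M (count_space UNIV) (X i) = measure_pmf p"
    and p1: "pmf p 0 < 1"
    and bnd: "measure_pmf.prob p {..k} = 1"
  shows "prob {\<omega>\<in>space M. OPN L (\<lambda>i. X i \<omega>)}
          \<ge> (1 - pmf p 0) ^ k * (1 - (\<Prod>j<k. measure_pmf.prob p {..j})) ^ L"
proof -
  define F where "F t = measure_pmf.prob p {..t}" for t
  define q where "q = (\<Prod>j<k. F j)"
  define p0 where "p0 = pmf p 0"
  define E where "E n f = (\<forall>i\<in>{1..n}. 1 \<le> sig f i)" for n f
  define PE where "PE n = prob {\<omega>\<in>space M. E n (\<lambda>i. X i \<omega>)}" for n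
  define b where "b n t = prob {\<omega>\<in>space M. E n (\<lambda>i. X i \<omega>) \<and> sig (\<lambda>i. X i \<omega>) n \<le> t}" for n t
  define G where "G n t = (\<Prod>j<n. F (t + j))" for n t
  have F01: "0 \<le> F t \<and> F t \<le> 1" for t by (simp add: F_def)
  have F0: "F 0 = p0" unfolding F_def p0_def
    by (simp add: measure_pmf_single[symmetric])
  have Fk: "F t = 1" if "k \<le> t" for t
  proof -
    have "measure_pmf.prob p {..k} \<le> F t" unfolding F_def
      by (rule measure_pmf.finite_measure_mono) (use that in auto)
    then show ?thesis using F01[of t] bnd by simp
  qed
  have G01: "0 \<le> G n t \<and> G n t \<le> 1" for n t
    unfolding G_def using F01 by (auto intro!: prod_nonneg prod_le_1)
  have Xm: "X i \<in> measurable M (count_space UNIV)" if "i < L" for i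
    using ind that by (auto simp: indep_vars_def)
  have PX: "prob {\<omega>\<in>space M. X i \<omega> \<le> t} = F t" if "i < L" for i t
  proof -
    have "F t = measure (distr M (count_space UNIV) (X i)) {..t}" unfolding F_def using dist[OF that] by simp
    also have "\<dots> = measure M (X i -` {..t} \<inter> space M)"
      by (rule measure_distr[OF Xm[OF that]]) auto
    finally show ?thesis by (simp add: vimage_def Int_def conj_commute)
  qed
  have E_Suc: "E (Suc n) f = (E n f \<and> 1 \<le> sig f (Suc n))" for n f
    unfolding E_def by (auto simp: atLeastAtMostSuc_conv)
  have locE: "E n f = E n f'" if "\<And>j. j < n \<Longrightarrow> f j = f' j" for n f f'
    unfolding E_def using sig_cong[of _ f f'] that by (auto intro!: ball_cong)
  have meas: "{\<omega>\<in>space M. g (\<lambda>i. X i \<omega>)} \<in> events"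
    if "n \<le> L" "\<And>f f'. (\<And>j. j < n \<Longrightarrow> f j = f' j) \<Longrightarrow> g f = g f'" for g n
  proof (rule ev_meas[OF ind, of "{..<n}"])
    show "{..<n} \<subseteq> {..<L}" using that(1) by auto
    fix f f' :: "nat \<Rightarrow> nat" assume "\<And>i. i \<in> {..<n} \<Longrightarrow> f i = f' i"
    then show "g f = g f'" by (intro that(2)) auto
  qed simp
  have step: "b n (t+1) * F t = prob {\<omega>\<in>space M. E n (\<lambda>i. X i \<omega>) \<and> sig (\<lambda>i. X i \<omega>) n \<le> t + 1 \<and> X n \<omega> \<le> t}"
    if "n < L" for n t
  proof -
    define g where "g c f = (if c then E n f \<and> sig f n \<le> t + 1 else f n \<le> t)" for c f
    define K where "K c = (if c then {..<n} else {n})" for c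
    have "prob (\<Inter>c\<in>UNIV. {\<omega>\<in>space M. g c (\<lambda>i. X i \<omega>)}) = (\<Prod>c\<in>UNIV. prob {\<omega>\<in>space M. g c (\<lambda>i. X i \<omega>)})"
    proof (rule indep_blocks[OF ind])
      show "disjoint_family_on K UNIV" by (auto simp: disjoint_family_on_def K_def)
      fix c and f f' :: "nat \<Rightarrow> nat" assume "(\<And>i. i \<in> K c \<Longrightarrow> f i = f' i)"
      then show "g c f = g c f'" unfolding g_def K_def
        using locE[of n f f'] sig_cong[of n f f'] by (cases c) auto
    qed (use that in \<open>auto simp: K_def\<close>)
    moreover have "(\<Inter>c\<in>UNIV. {\<omega>\<in>space M. g c (\<lambda>i. X i \<omega>)}) = {\<omega>\<in>space M. E n (\<lambda>i. X i \<omega>) \<and> sig (\<lambda>i. X i \<omega>) n \<le> t + 1 \<and> X n \<omega> \<le> t}"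
      by (auto simp: g_def UNIV_bool)
    moreover have "(\<Prod>c\<in>UNIV. prob {\<omega>\<in>space M. g c (\<lambda>i. X i \<omega>)}) = b n (t+1) * F t"
      using PX[OF that, of t] by (simp add: UNIV_bool g_def b_def)
    ultimately show ?thesis by simp
  qed
  have main: "(\<forall>t. b n t \<le> G n t * PE n) \<and> PE n \<ge> (1 - p0) ^ (min n k) * (1 - q) ^ n" if "n \<le> L" for n
    using that
  proof (induction n)
    case 0
    have "b 0 t \<le> 1" for t unfolding b_def by simp
    then show ?case by (simp add: G_def PE_def E_def prob_space)
  next
    case (Suc n)
    then have nL: "n < L" by simp
    note IH = Suc.IH[OF less_imp_le[OF nL]]
    define A where "A t = {\<omega>\<in>space M. E n (\<lambda>i. X i \<omega>) \<and> sig (\<lambda>i. X i \<omega>) n \<le> t + 1 \<and> X n \<omega> \<le> t}" for t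
    have Aev: "A t \<in> events" for t unfolding A_def
    proof (rule meas[of "Suc n" "\<lambda>f. E n f \<and> sig f n \<le> t + 1 \<and> f n \<le> t"])
      fix f f' :: "nat \<Rightarrow> nat" assume h: "\<And>j. j < Suc n \<Longrightarrow> f j = f' j"
      have "E n f = E n f'" by (rule locE) (simp add: h)
      moreover have "sig f n = sig f' n" by (rule sig_cong) (simp add: h)
      moreover have "f n = f' n" by (simp add: h)
      ultimately show "(E n f \<and> sig f n \<le> t + 1 \<and> f n \<le> t) = (E n f' \<and> sig f' n \<le> t + 1 \<and> f' n \<le> t)" by simp
    qed (use nL in simp)
    have PA: "prob (A t) = b n (t+1) * F t" for t unfolding A_def using step[OF nL] by simp
    have A0: "A 0 \<subseteq> A t" for t by (auto simp: A_def)
    have b1: "b (Suc n) t = prob (A t - A 0)" for t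
      unfolding b_def A_def E_Suc by (intro arg_cong[where f=prob]) auto
    have b2: "b (Suc n) t = b n (t+1) * F t - b n 1 * F 0" for t
      using b1[of t] finite_measure_Diff[OF Aev Aev A0[of t]] PA by simp
    have En: "{\<omega>\<in>space M. E n (\<lambda>i. X i \<omega>)} \<in> events"
    proof (rule meas[of n "E n"])
      fix f f' :: "nat \<Rightarrow> nat" assume h: "\<And>j. j < n \<Longrightarrow> f j = f' j"
      show "E n f = E n f'" by (rule locE) (simp add: h)
    qed (use nL in simp)
    have P1: "PE (Suc n) = PE n - b n 1 * F 0"
    proof -
      have "PE (Suc n) = prob ({\<omega>\<in>space M. E n (\<lambda>i. X i \<omega>)} - A 0)"
        unfolding PE_def A_def E_Suc by (intro arg_cong[where f=prob]) auto
      also have "\<dots> = PE n - prob (A 0)"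
        by (subst finite_measure_Diff[OF En Aev[of 0]]) (auto simp: A_def PE_def)
      finally show ?thesis using PA[of 0] by simp
    qed
    have GS: "G (Suc n) t = F t * G n (t + 1)" for t
      unfolding G_def by (subst prod.lessThan_Suc_shift) (simp add: ac_simps)
    have bnn: "0 \<le> b n 1 * F 0" unfolding b_def using F01 by simp
    have inv: "b (Suc n) t \<le> G (Suc n) t * PE (Suc n)" for t
    proof -
      have "b (Suc n) t \<le> G n (t+1) * PE n * F t - b n 1 * F 0"
        using b2[of t] IH F01[of t] by (auto intro: mult_right_mono)
      also have "\<dots> = G (Suc n) t * PE n - b n 1 * F 0" by (simp add: GS)
      also have "\<dots> \<le> G (Suc n) t * PE n - G (Suc n) t * (b n 1 * F 0)"
        using G01[of "Suc n" t] bnn by (simp add: mult_left_le_one_le)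
      also have "\<dots> = G (Suc n) t * PE (Suc n)" by (simp add: P1 algebra_simps)
      finally show ?thesis .
    qed
    define H where "H = F 0 * G n 1"
    have H: "H = (\<Prod>j<Suc n. F j)" unfolding H_def G_def
      by (subst prod.lessThan_Suc_shift) simp
    have PEn: "PE (Suc n) \<ge> (1 - H) * PE n"
    proof -
      have "b n 1 * F 0 \<le> G n 1 * PE n * F 0" using IH F01[of 0] by (auto intro: mult_right_mono)
      then show ?thesis using P1 by (simp add: H_def algebra_simps)
    qed
    have PEnn: "0 \<le> PE n" unfolding PE_def by simp
    have Hle: "H \<le> p0" unfolding H_def F0[symmetric]
      using G01[of n 1] F01[of 0] by (simp add: mult_left_le)
    have q01: "0 \<le> q \<and> q \<le> 1" unfolding q_def using F01 by (auto intro!: prod_nonneg prod_le_1)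
    have p01: "0 \<le> p0 \<and> p0 < 1" using p1 by (simp add: p0_def)
    show ?case
    proof (intro conjI allI inv)
      show "(1 - p0) ^ min (Suc n) k * (1 - q) ^ Suc n \<le> PE (Suc n)"
      proof (cases "n < k")
        case True
        have "(1 - p0) ^ min (Suc n) k * (1 - q) ^ Suc n \<le> (1 - p0) * ((1 - p0) ^ min n k * (1 - q) ^ n)"
        proof -
          have "(1 - p0) ^ min (Suc n) k = (1 - p0) * (1 - p0) ^ min n k" using True by (simp add: min_def)
          moreover have "(1 - q) ^ Suc n \<le> (1 - q) ^ n" using q01 by (simp add: mult_left_le_one_le)
          ultimately show ?thesis using p01 q01
            by (simp add: mult_left_mono mult.assoc)
        qed
        also have "\<dots> \<le> (1 - p0) * PE n" using IH p01 by (simp add: mult_left_mono)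
        also have "\<dots> \<le> (1 - H) * PE n" using Hle PEnn by (simp add: mult_right_mono)
        also have "\<dots> \<le> PE (Suc n)" by (rule PEn)
        finally show ?thesis .
      next
        case False
        have Pq: "(\<Prod>j<m. F j) = q" if "k \<le> m" for m
          using that
        proof (induction m rule: dec_induct)
          case base then show ?case by (simp add: q_def)
        next
          case (step m) then show ?case using Fk[of m] by simp
        qed
        have Hq: "H = q" using Pq[of "Suc n"] False H by (simp del: prod.lessThan_Suc)
        have "(1 - p0) ^ min (Suc n) k * (1 - q) ^ Suc n = (1 - q) * ((1 - p0) ^ min n k * (1 - q) ^ n)"
          using False by (simp add: min_def)
        also have "\<dots> \<le> (1 - q) * PE n" using IH q01 by (simp add: mult_left_mono)
        also have "\<dots> \<le> PE (Suc n)" using PEn Hq by simp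
        finally show ?thesis .
      qed
    qed
  qed
  have "(1 - p0) ^ k * (1 - q) ^ L \<le> (1 - p0) ^ (min L k) * (1 - q) ^ L"
    using p1 by (auto simp: p0_def intro!: mult_right_mono power_decreasing zero_le_power
        simp: q_def F_def prod_le_1 prod_nonneg)
  also have "\<dots> \<le> PE L" using main[of L] by simp
  also have "PE L = prob {\<omega>\<in>space M. OPN L (\<lambda>i. X i \<omega>)}" unfolding PE_def E_def OPN_def ..
  finally show ?thesis by (simp add: p0_def q_def F_def)
qed

end


context prob_space begin

lemma second_moment:
  fixes A :: "'i \<Rightarrow> 'a set"
  assumes V: "finite V" and A: "\<And>v. v \<in> V \<Longrightarrow> A v \<in> events"
  shows "(\<Sum>v\<in>V. prob (A v))\<^sup>2 \<le> prob (\<Union>v\<in>V. A v) * (\<Sum>v\<in>V. \<Sum>w\<in>V. prob (A v \<inter> A w))"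
proof -
  define U where "U = (\<Union>v\<in>V. A v)"
  have U: "U \<in> events" unfolding U_def using V A by auto
  define f where "f x = (\<Sum>v\<in>V. indicator (A v) x :: ennreal)" for x
  define g where "g x = (indicator U x :: ennreal)" for x
  have fm: "f \<in> borel_measurable M" unfolding f_def using A by (auto intro!: borel_measurable_sum)
  have gm: "g \<in> borel_measurable M" unfolding g_def using U by simp
  have CS: "(\<integral>\<^sup>+x. f x * g x \<partial>M)\<^sup>2 \<le> (\<integral>\<^sup>+x. f x ^ 2 \<partial>M) * (\<integral>\<^sup>+x. g x ^ 2 \<partial>M)"
    by (rule Cauchy_Schwarz_nn_integral[OF fm gm])
  have fg: "f x * g x = f x" for x
  proof (cases "x \<in> U")
    case True then show ?thesis by (simp add: g_def)
  next
    case False then have "x \<notin> A v" if "v \<in> V" for v using that by (auto simp: U_def)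
    then show ?thesis by (simp add: f_def g_def)
  qed
  have f2: "f x ^ 2 = (\<Sum>v\<in>V. \<Sum>w\<in>V. indicator (A v \<inter> A w) x)" for x
    unfolding f_def power2_eq_square sum_product indicator_inter_arith ..
  have g2: "g x ^ 2 = indicator U x" for x by (simp add: g_def power2_eq_square indicator_inter_arith[symmetric])
  have I1: "(\<integral>\<^sup>+x. f x \<partial>M) = ennreal (\<Sum>v\<in>V. prob (A v))"
    unfolding f_def using A V by (subst nn_integral_sum) (auto simp: emeasure_eq_measure)
  have I2: "(\<integral>\<^sup>+x. f x ^ 2 \<partial>M) = ennreal (\<Sum>v\<in>V. \<Sum>w\<in>V. prob (A v \<inter> A w))"
    unfolding f2 using A V
    by (simp add: nn_integral_sum emeasure_eq_measure sum_nonneg Int)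
  have I3: "(\<integral>\<^sup>+x. g x ^ 2 \<partial>M) = ennreal (prob U)"
    unfolding g2 using U by (simp add: emeasure_eq_measure)
  have "ennreal ((\<Sum>v\<in>V. prob (A v))\<^sup>2) \<le> ennreal ((\<Sum>v\<in>V. \<Sum>w\<in>V. prob (A v \<inter> A w)) * prob U)"
    using CS unfolding fg I1 I2 I3
    by (simp add: ennreal_power ennreal_mult sum_nonneg)
  then have "(\<Sum>v\<in>V. prob (A v))\<^sup>2 \<le> (\<Sum>v\<in>V. \<Sum>w\<in>V. prob (A v \<inter> A w)) * prob U"
    by (subst (asm) ennreal_le_iff) (auto intro!: mult_nonneg_nonneg sum_nonneg)
  then show ?thesis by (simp add: U_def mult.commute)
qed

end


definition lev :: "nat list set \<Rightarrow> nat \<Rightarrow> nat list set" where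
  "lev T n = {v\<in>T. length v = n}"

definition ch :: "nat list set \<Rightarrow> nat list \<Rightarrow> nat list set" where
  "ch T u = {v\<in>T. \<exists>i. v = u @ [i]}"

lemma prefix_take_iff: "prefix a v \<longleftrightarrow> take (length a) v = a"
proof
  assume "prefix a v" then show "take (length a) v = a" by (auto simp: prefix_def)
next
  assume "take (length a) v = a"
  then show "prefix a v" by (metis append_take_drop_id prefixI)
qed

lemma rt_take: "rooted_tree T \<Longrightarrow> v \<in> T \<Longrightarrow> take i v \<in> T"
  unfolding rooted_tree_def using take_is_prefix by blast

lemma rt_prefix: "rooted_tree T \<Longrightarrow> v \<in> T \<Longrightarrow> prefix u v \<Longrightarrow> u \<in> T"
  unfolding rooted_tree_def by blast

lemma rt_ch_finite: "rooted_tree T \<Longrightarrow> u \<in> T \<Longrightarrow> finite (ch T u)"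
  unfolding rooted_tree_def ch_def by blast

lemma lev_finite:
  assumes tr: "rooted_tree T" shows "finite (lev T n)"
proof (induction n)
  case 0
  have "lev T 0 \<subseteq> {[]}" by (auto simp: lev_def)
  then show ?case by (rule finite_subset) simp
next
  case (Suc n)
  have "lev T (Suc n) \<subseteq> (\<Union>u\<in>lev T n. ch T u)"
  proof
    fix v assume v: "v \<in> lev T (Suc n)"
    then have "v = butlast v @ [last v]" by (cases v rule: rev_cases) (auto simp: lev_def)
    moreover have "butlast v \<in> T" using v rt_prefix[OF tr, of v "butlast v"] prefixeq_butlast
      by (auto simp: lev_def)
    ultimately show "v \<in> (\<Union>u\<in>lev T n. ch T u)" using v
      by (auto simp: lev_def ch_def intro!: bexI[of _ "butlast v"])
  qed
  moreover have "finite (\<Union>u\<in>lev T n. ch T u)"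
    using Suc.IH rt_ch_finite[OF tr] by (auto simp: lev_def)
  ultimately show ?case by (rule finite_subset)
qed

lemma Mdesc_root: "Mdesc T n [] = card (lev T n)"
  by (simp add: Mdesc_def lev_def)

lemma desc_set_sub: "{v\<in>T. prefix a v \<and> length v = length a + n} \<subseteq> lev T (length a + n)"
  by (auto simp: lev_def)

lemma Mdesc_Suc:
  assumes tr: "rooted_tree T" and a: "a \<in> T"
  shows "Mdesc T (Suc n) a = (\<Sum>c\<in>ch T a. Mdesc T n c)"
proof -
  define S where "S c = {v\<in>T. prefix c v \<and> length v = length c + n}" for c
  have eq: "{v\<in>T. prefix a v \<and> length v = length a + Suc n} = (\<Union>c\<in>ch T a. S c)"
  proof (intro equalityI subsetI)
    fix v assume v: "v \<in> {v\<in>T. prefix a v \<and> length v = length a + Suc n}"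
    define c where "c = take (Suc (length a)) v"
    have tk: "take (length a) v = a" using v prefix_take_iff by blast
    have "c = a @ [v ! length a]" unfolding c_def using v tk
      by (simp add: take_Suc_conv_app_nth)
    moreover have "c \<in> T" unfolding c_def using rt_take[OF tr] v by blast
    ultimately have "c \<in> ch T a" by (auto simp: ch_def)
    moreover have "v \<in> S c" using v by (auto simp: S_def c_def take_is_prefix)
    ultimately show "v \<in> (\<Union>c\<in>ch T a. S c)" by blast
  next
    fix v assume "v \<in> (\<Union>c\<in>ch T a. S c)"
    then obtain i where "a @ [i] \<in> T" "v \<in> S (a @ [i])" by (auto simp: ch_def)
    then show "v \<in> {v\<in>T. prefix a v \<and> length v = length a + Suc n}"
      by (auto simp: S_def dest: append_prefixD)
  qed
  have fin: "finite (S c)" for c unfolding S_def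
    by (rule finite_subset[OF desc_set_sub lev_finite[OF tr]])
  have dis: "S c \<inter> S c' = {}" if "c \<in> ch T a" "c' \<in> ch T a" "c \<noteq> c'" for c c'
    using that by (auto simp: S_def ch_def prefix_take_iff)
  have "Mdesc T (Suc n) a = card (\<Union>c\<in>ch T a. S c)" unfolding Mdesc_def eq ..
  also have "\<dots> = (\<Sum>c\<in>ch T a. card (S c))"
    by (rule card_UN_disjoint[OF rt_ch_finite[OF tr a]]) (use fin dis in auto)
  also have "\<dots> = (\<Sum>c\<in>ch T a. Mdesc T n c)" by (simp add: S_def Mdesc_def)
  finally show ?thesis .
qed

lemma card_ch_eq:
  assumes sym: "spherically_symmetric T" and "a \<in> T" "a' \<in> T" "length a = length a'"
  shows "card (ch T a) = card (ch T a')"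
proof -
  have "tree_degree T a = tree_degree T a'" using sym assms unfolding spherically_symmetric_def by blast
  moreover have "(a = []) = (a' = [])" using assms by auto
  ultimately show ?thesis unfolding tree_degree_def ch_def by (auto split: if_splits)
qed

lemma Mdesc_sym:
  assumes tr: "rooted_tree T" and sym: "spherically_symmetric T"
  shows "a \<in> T \<Longrightarrow> a' \<in> T \<Longrightarrow> length a = length a' \<Longrightarrow> Mdesc T n a = Mdesc T n a'"
proof (induction n arbitrary: a a')
  case 0
  have "{v\<in>T. prefix a v \<and> length v = length a + 0} = {a}" using 0
    by (auto simp: prefix_take_iff)
  moreover have "{v\<in>T. prefix a' v \<and> length v = length a' + 0} = {a'}" using 0
    by (auto simp: prefix_take_iff)
  ultimately show ?case by (simp add: Mdesc_def)
next
  case (Suc n)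
  have cc: "card (ch T a) = card (ch T a')" by (rule card_ch_eq[OF sym Suc.prems])
  show ?case
  proof (cases "ch T a = {}")
    case True
    then have "ch T a' = {}" using cc rt_ch_finite[OF tr Suc.prems(2)] by simp
    then show ?thesis using True Mdesc_Suc[OF tr Suc.prems(1)] Mdesc_Suc[OF tr Suc.prems(2)] by simp
  next
    case False
    then obtain c0 where c0: "c0 \<in> ch T a" by blast
    have c0T: "c0 \<in> T" "length c0 = Suc (length a)" using c0 by (auto simp: ch_def)
    have e1: "Mdesc T n c = Mdesc T n c0" if "c \<in> ch T a" for c
      using that c0T by (intro Suc.IH) (auto simp: ch_def)
    have e2: "Mdesc T n c = Mdesc T n c0" if "c \<in> ch T a'" for c
      using that c0T Suc.prems by (intro Suc.IH) (auto simp: ch_def)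
    have "Mdesc T (Suc n) a = card (ch T a) * Mdesc T n c0"
      using Mdesc_Suc[OF tr Suc.prems(1)] e1 by simp
    moreover have "Mdesc T (Suc n) a' = card (ch T a') * Mdesc T n c0"
      using Mdesc_Suc[OF tr Suc.prems(2)] e2 by simp
    ultimately show ?thesis using cc by simp
  qed
qed

lemma lev_split:
  assumes tr: "rooted_tree T" and sym: "spherically_symmetric T" and mn: "m \<le> n"
  shows "\<exists>d. card (lev T n) = card (lev T m) * d
           \<and> card {(v,w). v \<in> lev T n \<and> w \<in> lev T n \<and> take m v = take m w} = card (lev T m) * d * d"
proof (cases "lev T m = {}")
  case True
  have "lev T n = {}"
  proof (rule ccontr)
    assume "lev T n \<noteq> {}"
    then obtain v where "v \<in> T" "length v = n" by (auto simp: lev_def)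
    then have "take m v \<in> lev T m" using mn rt_take[OF tr] by (auto simp: lev_def)
    then show False using True by simp
  qed
  then show ?thesis using True by simp
next
  case False
  then obtain a0 where a0: "a0 \<in> lev T m" by blast
  define d where "d = Mdesc T (n - m) a0"
  define S where "S a = {v\<in>lev T n. take m v = a}" for a
  have Sd: "card (S a) = d" if "a \<in> lev T m" for a
  proof -
    have "S a = {v\<in>T. prefix a v \<and> length v = length a + (n - m)}"
      using that mn by (auto simp: S_def lev_def prefix_take_iff)
    then have "card (S a) = Mdesc T (n - m) a" by (simp add: Mdesc_def)
    also have "\<dots> = d" unfolding d_def using that a0
      by (intro Mdesc_sym[OF tr sym]) (auto simp: lev_def)
    finally show ?thesis .
  qed
  have finS: "finite (S a)" for a unfolding S_def using lev_finite[OF tr] by simp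
  have U: "lev T n = (\<Union>a\<in>lev T m. S a)"
    using mn rt_take[OF tr] by (auto simp: S_def lev_def)
  have disS: "S a \<inter> S a' = {}" if "a \<noteq> a'" for a a' using that by (auto simp: S_def)
  have c1: "card (lev T n) = card (lev T m) * d"
    unfolding U by (subst card_UN_disjoint) (use lev_finite[OF tr] finS disS Sd in auto)
  have U2: "{(v,w). v \<in> lev T n \<and> w \<in> lev T n \<and> take m v = take m w} = (\<Union>a\<in>lev T m. S a \<times> S a)"
    using mn rt_take[OF tr] by (auto simp: S_def lev_def)
  have c2: "card (\<Union>a\<in>lev T m. S a \<times> S a) = card (lev T m) * d * d"
    by (subst card_UN_disjoint) (use lev_finite[OF tr] finS Sd in \<open>auto simp: card_cartesian_product S_def\<close>)
  show ?thesis using c1 c2 U2 by auto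
qed



definition CH :: "(nat list \<Rightarrow> nat) \<Rightarrow> nat list \<Rightarrow> bool" where
  "CH r v \<longleftrightarrow> (\<forall>i\<in>{1..length v}. \<exists>j<i. i - j \<le> r (take j v))"

lemma CH_take: assumes "CH r v" shows "CH r (take m v)"
  unfolding CH_def
proof
  fix i assume i: "i \<in> {1..length (take m v)}"
  then have im: "i \<le> m" "i \<in> {1..length v}" by auto
  then obtain j where "j < i" "i - j \<le> r (take j v)" using assms unfolding CH_def by blast
  then show "\<exists>j<i. i - j \<le> r (take j (take m v))" using im
    by (intro exI[of _ j]) (simp add: min_def)
qed

lemma cone_char:
  assumes tr: "rooted_tree T"
  shows "v \<in> cone_cluster T r \<longleftrightarrow> v \<in> T \<and> CH r v"
proof
  assume "v \<in> cone_cluster T r"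
  then show "v \<in> T \<and> CH r v"
  proof (induction rule: cone_cluster.induct)
    case origin then show ?case using tr by (simp add: rooted_tree_def CH_def)
  next
    case (spread u v)
    have tk: "take (length u) v = u" using spread.hyps(3) prefix_take_iff by blast
    have lu: "length u \<le> length v" using spread.hyps(3) prefix_length_le by blast
    have "CH r v" unfolding CH_def
    proof
      fix i assume i: "i \<in> {1..length v}"
      show "\<exists>j<i. i - j \<le> r (take j v)"
      proof (cases "i \<le> length u")
        case True
        then have "i \<in> {1..length u}" using i by auto
        then obtain j where "j < i" "i - j \<le> r (take j u)"
          using spread.IH unfolding CH_def by blast
        moreover have "take j u = take j v" using tk \<open>j < i\<close> True
          by (metis min.absorb1 less_imp_le_nat order.trans take_take)
        ultimately show ?thesis by auto
      next
        case False
        then show ?thesis using spread.hyps(4) i tk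
          by (intro exI[of _ "length u"]) auto
      qed
    qed
    then show ?case using spread.hyps(2) by simp
  qed
next
  assume h: "v \<in> T \<and> CH r v"
  have "\<And>v. length v = n \<Longrightarrow> v \<in> T \<Longrightarrow> CH r v \<Longrightarrow> v \<in> cone_cluster T r" for n
  proof (induction n rule: less_induct)
    case (less n v)
    show ?case
    proof (cases "v = []")
      case True then show ?thesis by (simp add: cone_cluster.origin)
    next
      case False
      then have "length v \<in> {1..length v}" by (simp add: Suc_le_eq)
      then obtain j where j: "j < length v" "length v - j \<le> r (take j v)"
        using less.prems(3) unfolding CH_def by blast
      have lj: "length (take j v) = j" using j(1) by simp
      have c1: "take j v \<in> cone_cluster T r"
      proof (rule less.IH[of j])
        show "j < n" using j(1) less.prems(1) by simp
        show "take j v \<in> T" using rt_take[OF tr less.prems(2)] .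
        show "CH r (take j v)" using CH_take[OF less.prems(3)] .
      qed (rule lj)
      have c2: "prefix (take j v) v" by (rule take_is_prefix)
      have c3: "length v - length (take j v) \<le> r (take j v)" using lj j(2) by simp
      show ?thesis by (rule cone_cluster.spread[OF c1 less.prems(2) c2 c3])
    qed
  qed
  then show "v \<in> cone_cluster T r" using h by blast
qed

lemma cluster_inf_iff:
  assumes tr: "rooted_tree T"
  shows "infinite (cone_cluster T r) \<longleftrightarrow> (\<forall>n. \<exists>v\<in>T. length v = n \<and> CH r v)"
proof
  assume inf: "infinite (cone_cluster T r)"
  show "\<forall>n. \<exists>v\<in>T. length v = n \<and> CH r v"
  proof
    fix n
    have fin: "finite (\<Union>m\<le>n. lev T m)" using lev_finite[OF tr] by auto
    have "\<not> cone_cluster T r \<subseteq> (\<Union>m\<le>n. lev T m)" using inf fin finite_subset by blast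
    then obtain v where v: "v \<in> cone_cluster T r" "n < length v"
      using cone_char[OF tr] by (force simp: lev_def)
    then have "take n v \<in> T" "CH r (take n v)" using cone_char[OF tr] rt_take[OF tr] CH_take by blast+
    then show "\<exists>v\<in>T. length v = n \<and> CH r v" using v by (intro bexI[of _ "take n v"]) auto
  qed
next
  assume h: "\<forall>n. \<exists>v\<in>T. length v = n \<and> CH r v"
  show "infinite (cone_cluster T r)"
  proof
    assume fin: "finite (cone_cluster T r)"
    have "UNIV \<subseteq> length ` cone_cluster T r"
    proof
      fix x :: nat
      obtain v where "v \<in> T" "length v = x" "CH r v" using h by blast
      then show "x \<in> length ` cone_cluster T r" using cone_char[OF tr] by (auto simp: image_iff)
    qed
    then show False using fin by (metis finite_imageI finite_subset infinite_UNIV_nat)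
  qed
qed

definition blk :: "nat \<Rightarrow> nat list \<Rightarrow> nat \<Rightarrow> (nat list \<Rightarrow> nat) \<Rightarrow> bool" where
  "blk L v b r \<longleftrightarrow> OPN L (\<lambda>j. r (take (b * L + j) v))"

lemma blocks_CH:
  assumes L: "1 \<le> L" and lv: "length v = n * L" and B: "\<forall>b<n. blk L v b r"
  shows "CH r v"
  unfolding CH_def
proof
  fix i assume i: "i \<in> {1..length v}"
  define b where "b = (i - 1) div L"
  define i' where "i' = i - b * L"
  have dm: "b * L + (i - 1) mod L = i - 1" unfolding b_def by (simp add: div_mult_mod_eq)
  have ml: "(i - 1) mod L < L" using L by simp
  have bL: "b * L \<le> i - 1" using dm by linarith
  have i'1: "1 \<le> i'" using bL i unfolding i'_def by auto
  have i'L: "i' \<le> L" unfolding i'_def using dm ml i by auto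
  have bn: "b < n"
  proof -
    have "i - 1 < n * L" using i lv by auto
    then have "(i - 1) div L < n" using L by (subst div_less_iff_less_mult) auto
    then show ?thesis by (simp add: b_def)
  qed
  have "OPN L (\<lambda>j. r (take (b * L + j) v))" using B bn unfolding blk_def by blast
  moreover have "i' \<in> {1..L}" using i'1 i'L by simp
  ultimately obtain j' where j': "j' < i'" "i' - j' \<le> r (take (b * L + j') v)"
    unfolding OPN_iff by blast
  have e1: "b * L + j' < i" using j'(1) bL i'1 unfolding i'_def by linarith
  have e2: "i - (b * L + j') = i' - j'" using bL i'1 unfolding i'_def by linarith
  show "\<exists>j<i. i - j \<le> r (take j v)"
    using e1 e2 j'(2) by (intro exI[of _ "b * L + j'"]) simp
qed



lemma term_bound:
  fixes r Nm d :: real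
  assumes r: "0 < r" and mn: "m \<le> n" and n: "0 < n" and g: "2 ^ m \<le> Nm * r ^ m"
    and Nm: "0 \<le> Nm" and d: "0 \<le> d"
  shows "r ^ (2 * n - 1 - m) * (Nm * d * d) \<le> ((Nm * d) * r ^ n)\<^sup>2 / r * (1 / 2) ^ m"
proof -
  define a where "a = r ^ (2 * n - 1 - m)"
  have ra: "r * a = r ^ (2 * n - m)" unfolding a_def using mn n
    by (metis Suc_diff_Suc diff_diff_left mult_2 power_Suc le_add1 less_le_trans not_less_eq
        plus_1_eq_Suc add_diff_inverse_nat diff_is_0_eq' less_numeral_extra(3) zero_less_diff)
  have r2: "r ^ n * r ^ n = r ^ (2 * n - m) * r ^ m"
    using mn by (simp add: power_add[symmetric] mult_2)
  have a0: "0 \<le> a" unfolding a_def using r by simp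
  have "r * a * 2 ^ m * (Nm * d * d) \<le> r * a * (Nm * r ^ m) * (Nm * d * d)"
    using g r a0 Nm d by (intro mult_right_mono mult_left_mono) auto
  also have "\<dots> = ((Nm * d) * r ^ n)\<^sup>2" unfolding ra power2_eq_square
    using r2 by (simp add: algebra_simps)
  finally have "r * a * 2 ^ m * (Nm * d * d) \<le> ((Nm * d) * r ^ n)\<^sup>2" .
  then show ?thesis unfolding a_def[symmetric] using r
    by (simp add: field_simps power_divide)
qed

lemma geo_le2: "(\<Sum>m\<le>n. (1/2::real) ^ m) \<le> 2"
proof -
  have "(\<Sum>m\<le>n. (1/2::real) ^ m) = (\<Sum>m<Suc n. (1/2::real) ^ m)" by (simp add: lessThan_Suc_atMost)
  also have "\<dots> = (1 - (1/2)^Suc n) / (1 - 1/2)" by (subst sum_gp_strict) simp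
  also have "\<dots> \<le> 2" by simp
  finally show ?thesis .
qed



locale cone_setting = prob_space M for M :: "'a measure" +
  fixes T :: "nat list set" and p :: "nat pmf" and k :: nat and R :: "nat list \<Rightarrow> 'a \<Rightarrow> nat"
  assumes tree: "rooted_tree T"
    and ind: "indep_vars (\<lambda>_. count_space UNIV) R T"
    and dst: "\<forall>v\<in>T. distr M (count_space UNIV) (R v) = measure_pmf p"
begin

lemma Rm: "v \<in> T \<Longrightarrow> R v \<in> measurable M (count_space UNIV)"
  using ind by (auto simp: indep_vars_def)

definition SL :: "nat \<Rightarrow> (nat \<Rightarrow> nat) set" where
  "SL L = {x\<in>space (PiM {..<L} (\<lambda>_. count_space UNIV)). OPN L x}"

definition rho :: "nat \<Rightarrow> real" where
  "rho L = measure (PiM {..<L} (\<lambda>_. measure_pmf p)) (SL L)"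

lemma SL_sets: "SL L \<in> sets (PiM {..<L} (\<lambda>_. count_space UNIV))"
proof -
  have "OPN L \<in> measurable (PiM {..<L} (\<lambda>_. count_space UNIV)) (count_space UNIV)"
    by (rule meas_finPi) simp
  then show ?thesis unfolding SL_def by (simp add: pred_def[symmetric])
qed

lemma blkprob:
  assumes L: "0 < L" and u: "inj_on u {..<L}" "u ` {..<L} \<subseteq> T"
  shows "prob {\<omega>\<in>space M. OPN L (\<lambda>j. R (u j) \<omega>)} = rho L"
proof -
  define Y where "Y i = (if i < L then R (u i) else (\<lambda>_. 0))" for i
  have Ym: "random_variable (count_space UNIV) (Y i)" for i
    using Rm u by (auto simp: Y_def)
  have i1: "indep_vars (\<lambda>_. count_space UNIV) (\<lambda>j. R (u j)) {..<L}"
    by (rule indep_vars_reindex[OF ind u])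
  have i2: "indep_vars (\<lambda>_. count_space UNIV) Y {..<L}"
    using i1 by (subst indep_vars_cong[where Y="\<lambda>j. R (u j)" and N'="\<lambda>_. count_space UNIV"]) (auto simp: Y_def)
  have de: "distr M (PiM {..<L} (\<lambda>_. count_space UNIV)) (\<lambda>x. \<lambda>i\<in>{..<L}. Y i x)
      = PiM {..<L} (\<lambda>i. distr M (count_space UNIV) (Y i))"
    using i2 indep_vars_iff_distr_eq_PiM[where I="{..<L}" and M'="\<lambda>_. count_space UNIV" and X=Y] L Ym by auto
  also have "\<dots> = PiM {..<L} (\<lambda>_. measure_pmf p)"
    by (rule PiM_cong) (use dst u in \<open>auto simp: Y_def\<close>)
  finally have de2: "distr M (PiM {..<L} (\<lambda>_. count_space UNIV)) (\<lambda>x. \<lambda>i\<in>{..<L}. Y i x) = PiM {..<L} (\<lambda>_. measure_pmf p)" .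
  have fm: "(\<lambda>x. \<lambda>i\<in>{..<L}. Y i x) \<in> measurable M (PiM {..<L} (\<lambda>_. count_space UNIV))"
    using Ym by (intro measurable_restrict) auto
  have "rho L = measure (distr M (PiM {..<L} (\<lambda>_. count_space UNIV)) (\<lambda>x. \<lambda>i\<in>{..<L}. Y i x)) (SL L)"
    unfolding rho_def de2 ..
  also have "\<dots> = measure M ((\<lambda>x. \<lambda>i\<in>{..<L}. Y i x) -` SL L \<inter> space M)"
    by (rule measure_distr[OF fm SL_sets])
  also have "(\<lambda>x. \<lambda>i\<in>{..<L}. Y i x) -` SL L \<inter> space M = {\<omega>\<in>space M. OPN L (\<lambda>j. R (u j) \<omega>)}"
  proof -
    have "OPN L (\<lambda>i\<in>{..<L}. Y i \<omega>) = OPN L (\<lambda>j. R (u j) \<omega>)" for \<omega>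
      by (rule OPN_cong) (simp add: Y_def)
    moreover have "(\<lambda>i\<in>{..<L}. Y i \<omega>) \<in> space (PiM {..<L} (\<lambda>_. count_space UNIV))" for \<omega>
      by (simp add: space_PiM)
    ultimately show ?thesis by (auto simp: SL_def)
  qed
  finally show ?thesis by simp
qed

definition Kb :: "nat \<Rightarrow> nat list \<Rightarrow> nat \<Rightarrow> nat list set" where
  "Kb L v b = (\<lambda>j. take (b * L + j) v) ` {..<L}"

definition Ev :: "nat \<Rightarrow> nat list \<Rightarrow> nat \<Rightarrow> 'a set" where
  "Ev L v b = {\<omega>\<in>space M. blk L v b (\<lambda>u. R u \<omega>)}"

lemma blk_loc: "(\<And>i. i \<in> Kb L v b \<Longrightarrow> f i = f' i) \<Longrightarrow> blk L v b f = blk L v b f'"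
  unfolding blk_def Kb_def by (rule OPN_cong) auto

lemma Kb_sub: "v \<in> T \<Longrightarrow> Kb L v b \<subseteq> T"
  unfolding Kb_def using rt_take[OF tree] by auto

lemma Ev_sets: "v \<in> T \<Longrightarrow> Ev L v b \<in> events"
  unfolding Ev_def
proof (rule ev_meas[OF ind, of "Kb L v b"])
  show "finite (Kb L v b)" by (simp add: Kb_def)
  show "Kb L v b \<subseteq> T" if "v \<in> T" using Kb_sub[OF that] .
  fix f f' :: "nat list \<Rightarrow> nat" assume "\<And>i. i \<in> Kb L v b \<Longrightarrow> f i = f' i"
  then show "blk L v b f = blk L v b f'" by (rule blk_loc)
qed

lemma Ev_prob:
  assumes L: "0 < L" and v: "v \<in> T" and bl: "(b + 1) * L \<le> length v"
  shows "prob (Ev L v b) = rho L"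
proof -
  have "prob {\<omega>\<in>space M. OPN L (\<lambda>j. R (take (b * L + j) v) \<omega>)} = rho L"
  proof (rule blkprob[OF L])
    show "inj_on (\<lambda>j. take (b * L + j) v) {..<L}"
    proof (rule inj_onI)
      fix x y assume "x \<in> {..<L}" "y \<in> {..<L}" "take (b * L + x) v = take (b * L + y) v"
      then have "length (take (b * L + x) v) = length (take (b * L + y) v)" by simp
      then show "x = y" using bl \<open>x \<in> {..<L}\<close> \<open>y \<in> {..<L}\<close> by (simp add: min_def split: if_splits)
    qed
    show "(\<lambda>j. take (b * L + j) v) ` {..<L} \<subseteq> T" using Kb_sub[OF v] by (simp add: Kb_def)
  qed
  then show ?thesis by (simp add: Ev_def blk_def)
qed

lemma blocks_prod:
  assumes L: "0 < L" and Bs: "finite Bs" "Bs \<noteq> {}"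
    and BT: "\<And>v b. (v, b) \<in> Bs \<Longrightarrow> v \<in> T \<and> (b + 1) * L \<le> length v"
    and dis: "disjoint_family_on (\<lambda>(v, b). Kb L v b) Bs"
  shows "prob (\<Inter>(v, b)\<in>Bs. Ev L v b) = rho L ^ card Bs"
proof -
  have "prob (\<Inter>\<beta>\<in>Bs. {\<omega>\<in>space M. (\<lambda>(v, b) f. blk L v b f) \<beta> (\<lambda>i. R i \<omega>)})
      = (\<Prod>\<beta>\<in>Bs. prob {\<omega>\<in>space M. (\<lambda>(v, b) f. blk L v b f) \<beta> (\<lambda>i. R i \<omega>)})"
  proof (rule indep_blocks[OF ind Bs _ dis])
    fix \<beta> assume b: "\<beta> \<in> Bs"
    obtain v b where vb: "\<beta> = (v, b)" by (cases \<beta>)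
    have "v \<in> T" using BT b vb by blast
    then have "Kb L v b \<subseteq> T" by (rule Kb_sub)
    moreover have "finite (Kb L v b)" by (simp add: Kb_def)
    ultimately show "finite ((\<lambda>(v, b). Kb L v b) \<beta>) \<and> (\<lambda>(v, b). Kb L v b) \<beta> \<subseteq> T"
      using vb by simp
  next
    fix \<beta> and f f' :: "nat list \<Rightarrow> nat"
    assume h: "\<beta> \<in> Bs" "\<And>i. i \<in> (\<lambda>(v, b). Kb L v b) \<beta> \<Longrightarrow> f i = f' i"
    obtain v b where vb: "\<beta> = (v, b)" by (cases \<beta>)
    have "blk L v b f = blk L v b f'" by (rule blk_loc) (use h(2) vb in simp)
    then show "(\<lambda>(v, b) f. blk L v b f) \<beta> f = (\<lambda>(v, b) f. blk L v b f) \<beta> f'" using vb by simp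
  qed
  moreover have "(\<Inter>\<beta>\<in>Bs. {\<omega>\<in>space M. (\<lambda>(v, b) f. blk L v b f) \<beta> (\<lambda>i. R i \<omega>)}) = (\<Inter>(v, b)\<in>Bs. Ev L v b)"
    by (auto simp: Ev_def split: prod.splits)
  moreover have "prob {\<omega>\<in>space M. (\<lambda>(v, b) f. blk L v b f) \<beta> (\<lambda>i. R i \<omega>)} = rho L" if "\<beta> \<in> Bs" for \<beta>
    using Ev_prob[OF L] BT that by (auto simp: Ev_def split: prod.splits)
  ultimately show ?thesis by simp
qed

definition Av :: "nat \<Rightarrow> nat \<Rightarrow> nat list \<Rightarrow> 'a set" where
  "Av L n v = {\<omega>\<in>space M. \<forall>b<n. blk L v b (\<lambda>u. R u \<omega>)}"

lemma Av_eq: "0 < n \<Longrightarrow> Av L n v = (\<Inter>b\<in>{..<n}. Ev L v b)"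
  unfolding Av_def Ev_def by auto

lemma Av_sets: "v \<in> T \<Longrightarrow> Av L n v \<in> events"
proof (cases "n = 0")
  case True then show ?thesis by (simp add: Av_def)
next
  case False
  assume v: "v \<in> T"
  have "(\<Inter>b\<in>{..<n}. Ev L v b) \<in> events" using Ev_sets[OF v] False by (intro sets.finite_INT) auto
  then show ?thesis using False by (simp add: Av_eq)
qed

lemma blen: "b < n \<Longrightarrow> L + b * L \<le> n * (L::nat)"
  by (metis Suc_leI mult_Suc mult_le_mono1)

lemma Kb_len:
  assumes "(b + 1) * L \<le> length v" "x \<in> Kb L v b"
  shows "length x div L = b \<and> b * L \<le> length x \<and> take (length x) v = x"
proof -
  obtain j where j: "j < L" "x = take (b * L + j) v" using assms(2) by (auto simp: Kb_def)
  then have lx: "length x = b * L + j" using assms(1) by (simp add: min_def)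
  then have "length x div L = b" using j(1) by simp
  then show ?thesis using lx j by simp
qed

lemma Kb_disj:
  assumes "(b + 1) * L \<le> length v" "(b' + 1) * L \<le> length w" "x \<in> Kb L v b" "x \<in> Kb L w b'"
  shows "b = b' \<and> b * L \<le> length x \<and> take (length x) v = take (length x) w"
  using Kb_len[OF assms(1,3)] Kb_len[OF assms(2,4)] by simp

lemma Av_prob:
  assumes L: "0 < L" and n: "0 < n" and v: "v \<in> T" "length v = n * L"
  shows "prob (Av L n v) = rho L ^ n"
proof -
  define Bs where "Bs = (\<lambda>b. (v, b)) ` {..<n}"
  have cB: "card Bs = n" unfolding Bs_def by (subst card_image) (auto simp: inj_on_def)
  have "Av L n v = (\<Inter>(v, b)\<in>Bs. Ev L v b)" using n by (auto simp: Av_eq Bs_def)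
  also have "prob \<dots> = rho L ^ card Bs"
  proof (rule blocks_prod[OF L])
    show "finite Bs" "Bs \<noteq> {}" using n by (auto simp: Bs_def)
    fix v' b assume "(v', b) \<in> Bs"
    then show "v' \<in> T \<and> (b + 1) * L \<le> length v'" using v
      by (auto simp: Bs_def blen)
  next
    show "disjoint_family_on (\<lambda>(v, b). Kb L v b) Bs"
      unfolding disjoint_family_on_def
    proof (intro ballI impI)
      fix \<beta>1 \<beta>2 assume b: "\<beta>1 \<in> Bs" "\<beta>2 \<in> Bs" "\<beta>1 \<noteq> \<beta>2"
      then obtain b1 b2 where bb: "\<beta>1 = (v, b1)" "\<beta>2 = (v, b2)" "b1 < n" "b2 < n" "b1 \<noteq> b2"
        by (auto simp: Bs_def)
      have l1: "(b1 + 1) * L \<le> length v" "(b2 + 1) * L \<le> length v"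
        using bb v by (auto simp: blen)
      show "(case \<beta>1 of (v, b) \<Rightarrow> Kb L v b) \<inter> (case \<beta>2 of (v, b) \<Rightarrow> Kb L v b) = {}"
        using Kb_disj[OF l1] bb by auto
    qed
  qed
  finally show ?thesis using cB by simp
qed

lemma Av_pair:
  assumes L: "0 < L" and v: "v \<in> T" "length v = n * L" and w: "w \<in> T" "length w = n * L"
    and m: "m < n" and neq: "take ((m + 1) * L) v \<noteq> take ((m + 1) * L) w"
  shows "prob (Av L n v \<inter> Av L n w) \<le> rho L ^ (2 * n - 1 - m)"
proof -
  define B1 where "B1 = (\<lambda>b. (v, b)) ` {..<n}"
  define B2 where "B2 = (\<lambda>b. (w, b)) ` {m<..<n}"
  define Bs where "Bs = B1 \<union> B2"
  have vw: "v \<noteq> w" using neq by auto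
  have c1: "card B1 = n" unfolding B1_def by (subst card_image) (auto simp: inj_on_def)
  have c2: "card B2 = n - Suc m" unfolding B2_def by (subst card_image) (auto simp: inj_on_def)
  have dj: "B1 \<inter> B2 = {}" using vw by (auto simp: B1_def B2_def)
  have cB: "card Bs = 2 * n - 1 - m" unfolding Bs_def
    using card_Un_disjoint[of B1 B2] dj c1 c2 m by (simp add: B1_def B2_def)
  have BT: "v' \<in> T \<and> (b + 1) * L \<le> length v'" if "(v', b) \<in> Bs" for v' b
    using that v w by (auto simp: Bs_def B1_def B2_def blen)
  have sub: "Av L n v \<inter> Av L n w \<subseteq> (\<Inter>(v, b)\<in>Bs. Ev L v b)"
    by (auto simp: Av_def Ev_def Bs_def B1_def B2_def)
  have ev: "(\<Inter>(v, b)\<in>Bs. Ev L v b) \<in> events"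
    using Ev_sets[OF v(1)] Ev_sets[OF w(1)] m by (intro sets.finite_INT) (auto simp: Bs_def B1_def B2_def)
  have "prob (\<Inter>(v, b)\<in>Bs. Ev L v b) = rho L ^ card Bs"
  proof (rule blocks_prod[OF L])
    show "finite Bs" "Bs \<noteq> {}" using m by (auto simp: Bs_def B1_def B2_def)
    show "\<And>v b. (v, b) \<in> Bs \<Longrightarrow> v \<in> T \<and> (b + 1) * L \<le> length v" by (rule BT)
    show "disjoint_family_on (\<lambda>(v, b). Kb L v b) Bs"
      unfolding disjoint_family_on_def
    proof (intro ballI impI)
      fix \<beta>1 \<beta>2 assume b: "\<beta>1 \<in> Bs" "\<beta>2 \<in> Bs" "\<beta>1 \<noteq> \<beta>2"
      obtain v1 b1 where e1: "\<beta>1 = (v1, b1)" by (cases \<beta>1)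
      obtain v2 b2 where e2: "\<beta>2 = (v2, b2)" by (cases \<beta>2)
      show "(case \<beta>1 of (v, b) \<Rightarrow> Kb L v b) \<inter> (case \<beta>2 of (v, b) \<Rightarrow> Kb L v b) = {}"
      proof (rule ccontr)
        assume "(case \<beta>1 of (v, b) \<Rightarrow> Kb L v b) \<inter> (case \<beta>2 of (v, b) \<Rightarrow> Kb L v b) \<noteq> {}"
        then obtain x where x: "x \<in> Kb L v1 b1" "x \<in> Kb L v2 b2" using e1 e2 by auto
        have kd: "b1 = b2 \<and> b1 * L \<le> length x \<and> take (length x) v1 = take (length x) v2"
          using Kb_disj[OF conjunct2[OF BT[OF b(1)[unfolded e1]]] conjunct2[OF BT[OF b(2)[unfolded e2]]] x] by blast
        then have "v1 \<noteq> v2" using b e1 e2 by auto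
        then have "m < b1" using b e1 e2 kd by (auto simp: Bs_def B1_def B2_def)
        then have "(m + 1) * L \<le> length x" using kd by (metis Suc_eq_plus1 Suc_leI mult_le_mono1 order.trans)
        then have "take ((m + 1) * L) v1 = take ((m + 1) * L) v2" using kd
          by (metis min.absorb1 take_take)
        moreover have "{v1, v2} = {v, w}" using \<open>v1 \<noteq> v2\<close> b e1 e2 by (auto simp: Bs_def B1_def B2_def)
        ultimately show False using neq by (auto simp: doubleton_eq_iff)
      qed
    qed
  qed
  then have "prob (\<Inter>(v, b)\<in>Bs. Ev L v b) = rho L ^ (2 * n - 1 - m)" using cB by simp
  moreover have "prob (Av L n v \<inter> Av L n w) \<le> prob (\<Inter>(v, b)\<in>Bs. Ev L v b)"
    by (rule finite_measure_mono[OF sub ev])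
  ultimately show ?thesis by simp
qed

lemma pair_bound:
  assumes L: "0 < L" and n: "0 < n" and v: "v \<in> lev T (n * L)" and w: "w \<in> lev T (n * L)"
    and r: "0 \<le> rho L" "rho L \<le> 1"
  shows "prob (Av L n v \<inter> Av L n w)
     \<le> (\<Sum>m\<le>n. if take (m * L) v = take (m * L) w then rho L ^ (2 * n - 1 - m) else 0)"
proof -
  define Ms where "Ms = {m. m \<le> n \<and> take (m * L) v = take (m * L) w}"
  have finM: "finite Ms" unfolding Ms_def by simp
  have "0 \<in> Ms" unfolding Ms_def by simp
  define ms where "ms = Max Ms"
  have msM: "ms \<in> Ms" unfolding ms_def using finM \<open>0 \<in> Ms\<close> by (intro Max_in) auto
  have msmax: "m \<le> ms" if "m \<in> Ms" for m unfolding ms_def using finM that by simp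
  have vT: "v \<in> T" "length v = n * L" and wT: "w \<in> T" "length w = n * L" using v w by (auto simp: lev_def)
  have nonneg: "0 \<le> (if take (m * L) v = take (m * L) w then rho L ^ (2 * n - 1 - m) else 0)" for m
    using r by simp
  have le_sum: "rho L ^ (2 * n - 1 - ms)
     \<le> (\<Sum>m\<le>n. if take (m * L) v = take (m * L) w then rho L ^ (2 * n - 1 - m) else 0)"
  proof -
    have "ms \<in> {..n}" "take (ms * L) v = take (ms * L) w" using msM by (auto simp: Ms_def)
    then show ?thesis
      using member_le_sum[of ms "{..n}" "\<lambda>m. if take (m * L) v = take (m * L) w then rho L ^ (2 * n - 1 - m) else 0"] nonneg
      by auto
  qed
  show ?thesis
  proof (cases "ms = n")
    case True
    then have "v = w" using msM vT wT by (simp add: Ms_def)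
    then have "prob (Av L n v \<inter> Av L n w) = rho L ^ n" using Av_prob[OF L n vT] by simp
    also have "\<dots> \<le> rho L ^ (2 * n - 1 - ms)" using True r n by (intro power_decreasing) auto
    finally show ?thesis using le_sum by simp
  next
    case False
    then have msn: "ms < n" using msM by (auto simp: Ms_def)
    have "Suc ms \<notin> Ms" using msmax by fastforce
    then have neq: "take ((ms + 1) * L) v \<noteq> take ((ms + 1) * L) w" using msn by (auto simp: Ms_def)
    have "prob (Av L n v \<inter> Av L n w) \<le> rho L ^ (2 * n - 1 - ms)"
      by (rule Av_pair[OF L vT wT msn neq])
    then show ?thesis using le_sum by simp
  qed
qed

lemma Pn_lb:
  assumes L: "0 < L" and n: "0 < n" and sym: "spherically_symmetric T"
    and growth: "\<And>m. m \<le> n \<Longrightarrow> 2 ^ m \<le> real (card (lev T (m * L))) * rho L ^ m"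
    and r: "0 < rho L" "rho L \<le> 1"
  shows "rho L / 2 \<le> prob (\<Union>v\<in>lev T (n * L). Av L n v)"
proof -
  define V where "V = lev T (n * L)"
  define \<rho> where "\<rho> = rho L"
  define N where "N = real (card V)"
  have finV: "finite V" unfolding V_def by (rule lev_finite[OF tree])
  have VT: "v \<in> T" "length v = n * L" if "v \<in> V" for v using that by (auto simp: V_def lev_def)
  have S1: "(\<Sum>v\<in>V. prob (Av L n v)) = N * \<rho> ^ n"
    using Av_prob[OF L n] VT by (simp add: N_def \<rho>_def)
  have SM: "(\<Sum>v\<in>V. prob (Av L n v))\<^sup>2 \<le> prob (\<Union>v\<in>V. Av L n v) * (\<Sum>v\<in>V. \<Sum>w\<in>V. prob (Av L n v \<inter> Av L n w))"
    by (rule second_moment[OF finV]) (use Av_sets VT in auto)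
  define c where "c m = card {(v, w). v \<in> V \<and> w \<in> V \<and> take (m * L) v = take (m * L) w}" for m
  have S2: "(\<Sum>v\<in>V. \<Sum>w\<in>V. prob (Av L n v \<inter> Av L n w)) \<le> (\<Sum>m\<le>n. \<rho> ^ (2 * n - 1 - m) * c m)"
  proof -
    have "(\<Sum>v\<in>V. \<Sum>w\<in>V. prob (Av L n v \<inter> Av L n w))
        \<le> (\<Sum>v\<in>V. \<Sum>w\<in>V. \<Sum>m\<le>n. if take (m * L) v = take (m * L) w then \<rho> ^ (2 * n - 1 - m) else 0)"
      unfolding \<rho>_def using pair_bound[OF L n] r unfolding V_def
      by (intro sum_mono) auto
    also have "\<dots> = (\<Sum>m\<le>n. \<Sum>v\<in>V. \<Sum>w\<in>V. if take (m * L) v = take (m * L) w then \<rho> ^ (2 * n - 1 - m) else 0)"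
      by (simp add: sum.swap[of _ "{..n}"])
    also have "\<dots> = (\<Sum>m\<le>n. \<rho> ^ (2 * n - 1 - m) * c m)"
    proof (rule sum.cong[OF refl])
      fix m
      have "(\<Sum>v\<in>V. \<Sum>w\<in>V. if take (m * L) v = take (m * L) w then \<rho> ^ (2 * n - 1 - m) else 0)
          = (\<Sum>x\<in>V \<times> V. if take (m * L) (fst x) = take (m * L) (snd x) then \<rho> ^ (2 * n - 1 - m) else 0)"
        by (simp add: sum.cartesian_product case_prod_beta)
      also have "\<dots> = (\<Sum>x\<in>{x\<in>V \<times> V. take (m * L) (fst x) = take (m * L) (snd x)}. \<rho> ^ (2 * n - 1 - m))"
        using finV by (subst sum.inter_filter[symmetric]) auto
      also have "{x\<in>V \<times> V. take (m * L) (fst x) = take (m * L) (snd x)} = {(v, w). v \<in> V \<and> w \<in> V \<and> take (m * L) v = take (m * L) w}"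
        by auto
      finally show "(\<Sum>v\<in>V. \<Sum>w\<in>V. if take (m * L) v = take (m * L) w then \<rho> ^ (2 * n - 1 - m) else 0) = \<rho> ^ (2 * n - 1 - m) * c m"
        by (simp add: c_def)
    qed
    finally show ?thesis .
  qed
  have termb: "\<rho> ^ (2 * n - 1 - m) * c m \<le> (N * \<rho> ^ n)\<^sup>2 / \<rho> * (1 / 2) ^ m" if m: "m \<le> n" for m
  proof -
    have mL: "m * L \<le> n * L" using m by simp
    obtain d where d: "card (lev T (n * L)) = card (lev T (m * L)) * d"
      "card {(v, w). v \<in> lev T (n * L) \<and> w \<in> lev T (n * L) \<and> take (m * L) v = take (m * L) w} = card (lev T (m * L)) * d * d"
      using lev_split[OF tree sym mL] by blast
    have cm: "real (c m) = real (card (lev T (m * L))) * real d * real d" unfolding c_def V_def using d(2) by simp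
    have Nd: "N = real (card (lev T (m * L))) * real d" unfolding N_def V_def using d(1) by simp
    show ?thesis unfolding cm Nd \<rho>_def
      by (rule term_bound[OF r(1) m n growth[OF m]]) auto
  qed
  have S2': "(\<Sum>v\<in>V. \<Sum>w\<in>V. prob (Av L n v \<inter> Av L n w)) \<le> (N * \<rho> ^ n)\<^sup>2 / \<rho> * 2"
  proof -
    have "(\<Sum>m\<le>n. \<rho> ^ (2 * n - 1 - m) * c m) \<le> (\<Sum>m\<le>n. (N * \<rho> ^ n)\<^sup>2 / \<rho> * (1 / 2) ^ m)"
      using termb by (intro sum_mono) auto
    also have "\<dots> = (N * \<rho> ^ n)\<^sup>2 / \<rho> * (\<Sum>m\<le>n. (1 / 2) ^ m)" by (simp add: sum_distrib_left)
    also have "\<dots> \<le> (N * \<rho> ^ n)\<^sup>2 / \<rho> * 2"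
      using geo_le2[of n] r by (intro mult_left_mono) (auto simp: \<rho>_def)
    finally show ?thesis using S2 by simp
  qed
  have Npos: "0 < N"
  proof -
    have "2 ^ n \<le> N * \<rho> ^ n" using growth[of n] by (simp add: N_def V_def \<rho>_def)
    moreover have "0 < (2::real) ^ n" by simp
    ultimately have "0 < N * \<rho> ^ n" by linarith
    then show ?thesis using r by (simp add: \<rho>_def zero_less_mult_iff)
  qed
  have X: "0 < (N * \<rho> ^ n)\<^sup>2" using Npos r by (simp add: \<rho>_def)
  define P where "P = prob (\<Union>v\<in>V. Av L n v)"
  have P0: "0 \<le> P" unfolding P_def by simp
  have a1: "(N * \<rho> ^ n)\<^sup>2 \<le> P * (\<Sum>v\<in>V. \<Sum>w\<in>V. prob (Av L n v \<inter> Av L n w))"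
    using SM unfolding S1 P_def .
  have a2: "P * (\<Sum>v\<in>V. \<Sum>w\<in>V. prob (Av L n v \<inter> Av L n w)) \<le> P * ((N * \<rho> ^ n)\<^sup>2 / \<rho> * 2)"
    by (rule mult_left_mono[OF S2' P0])
  have "(N * \<rho> ^ n)\<^sup>2 \<le> P * ((N * \<rho> ^ n)\<^sup>2 / \<rho> * 2)"
    using a1 a2 by (rule order.trans)
  then have "(N * \<rho> ^ n)\<^sup>2 * 1 \<le> (N * \<rho> ^ n)\<^sup>2 * (P * 2 / \<rho>)" by (simp add: field_simps)
  then have "1 \<le> P * 2 / \<rho>" by (subst (asm) mult_le_cancel_left_pos[OF X])
  then have "\<rho> / 2 \<le> P" using r by (simp add: \<rho>_def field_simps)
  then show ?thesis by (simp add: P_def V_def \<rho>_def)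
qed

lemma CH_sets:
  assumes v: "v \<in> T" shows "{\<omega>\<in>space M. CH (\<lambda>u. R u \<omega>) v} \<in> events"
proof (rule ev_meas[OF ind, of "(\<lambda>j. take j v) ` {..length v}"])
  show "finite ((\<lambda>j. take j v) ` {..length v})" by simp
  show "(\<lambda>j. take j v) ` {..length v} \<subseteq> T" using rt_take[OF tree v] by auto
  fix f f' :: "nat list \<Rightarrow> nat" assume h: "\<And>i. i \<in> (\<lambda>j. take j v) ` {..length v} \<Longrightarrow> f i = f' i"
  have "f (take j v) = f' (take j v)" if "j \<le> length v" for j using h that by auto
  then show "CH f v = CH f' v" unfolding CH_def
    by (intro ball_cong refl ex_cong1) (auto intro!: arg_cong2[where f="(\<le>)"])
qed

lemma surv_sets: "{\<omega>\<in>space M. infinite (cone_cluster T (\<lambda>v. R v \<omega>))} \<in> events"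
proof -
  have "{\<omega>\<in>space M. infinite (cone_cluster T (\<lambda>v. R v \<omega>))}
      = (\<Inter>d\<in>UNIV. \<Union>v\<in>lev T d. {\<omega>\<in>space M. CH (\<lambda>u. R u \<omega>) v})"
    unfolding cluster_inf_iff[OF tree] by (auto simp: lev_def)
  also have "\<dots> \<in> events"
    using CH_sets lev_finite[OF tree] by (intro countable_Un_Int(2) sets.finite_UN) (auto simp: lev_def)
  finally show ?thesis .
qed

lemma survive:
  assumes L: "0 < L" and sym: "spherically_symmetric T"
    and growth: "\<And>m. 2 ^ m \<le> real (card (lev T (m * L))) * rho L ^ m"
    and r: "0 < rho L" "rho L \<le> 1"
  shows "rho L / 2 \<le> prob {\<omega>\<in>space M. infinite (cone_cluster T (\<lambda>v. R v \<omega>))}"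
proof -
  define Bn where "Bn n = (\<Union>v\<in>lev T (Suc n * L). Av L (Suc n) v)" for n
  have Bev: "Bn n \<in> events" for n unfolding Bn_def
    using lev_finite[OF tree] Av_sets by (intro sets.finite_UN) (auto simp: lev_def)
  have dec: "decseq Bn"
  proof (rule decseq_SucI)
    fix n show "Bn (Suc n) \<subseteq> Bn n"
    proof
      fix \<omega> assume "\<omega> \<in> Bn (Suc n)"
      then obtain v where v: "v \<in> lev T (Suc (Suc n) * L)" "\<omega> \<in> Av L (Suc (Suc n)) v"
        unfolding Bn_def by blast
      define v' where "v' = take (Suc n * L) v"
      have v'l: "v' \<in> lev T (Suc n * L)" using v(1) rt_take[OF tree] by (auto simp: lev_def v'_def)
      have "blk L v' b (\<lambda>u. R u \<omega>) = blk L v b (\<lambda>u. R u \<omega>)" if "b < Suc n" for b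
        unfolding blk_def
      proof (rule OPN_cong)
        fix j assume "j < L"
        then have "b * L + j \<le> Suc n * L" using that blen[of b "Suc n" L] by linarith
        then show "R (take (b * L + j) v') \<omega> = R (take (b * L + j) v) \<omega>"
          by (simp add: v'_def min_def)
      qed
      then have "\<omega> \<in> Av L (Suc n) v'" using v(2) by (auto simp: Av_def)
      then show "\<omega> \<in> Bn n" using v'l unfolding Bn_def by blast
    qed
  qed
  have lim: "(\<lambda>n. prob (Bn n)) \<longlonglongrightarrow> prob (\<Inter>n. Bn n)"
    by (rule finite_Lim_measure_decseq) (use Bev dec in auto)
  have lb: "rho L / 2 \<le> prob (Bn n)" for n
    unfolding Bn_def by (rule Pn_lb[OF L _ sym growth r]) auto
  have "rho L / 2 \<le> prob (\<Inter>n. Bn n)"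
    by (rule LIMSEQ_le_const[OF lim]) (use lb in auto)
  also have "prob (\<Inter>n. Bn n) \<le> prob {\<omega>\<in>space M. infinite (cone_cluster T (\<lambda>v. R v \<omega>))}"
  proof (rule finite_measure_mono[OF _ surv_sets])
    show "(\<Inter>n. Bn n) \<subseteq> {\<omega>\<in>space M. infinite (cone_cluster T (\<lambda>v. R v \<omega>))}"
    proof
      fix \<omega> assume w: "\<omega> \<in> (\<Inter>n. Bn n)"
      have sp: "\<omega> \<in> space M" using w by (auto simp: Bn_def Av_def)
      have "\<exists>v\<in>T. length v = d \<and> CH (\<lambda>v. R v \<omega>) v" for d
      proof -
        obtain v where v: "v \<in> lev T (Suc d * L)" "\<omega> \<in> Av L (Suc d) v"
          using w unfolding Bn_def by blast
        have vl: "length v = Suc d * L" "v \<in> T" using v(1) by (auto simp: lev_def)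
        have "CH (\<lambda>v. R v \<omega>) v"
          by (rule blocks_CH[of L v "Suc d"]) (use L vl v(2) in \<open>auto simp: Av_def\<close>)
        then have "CH (\<lambda>v. R v \<omega>) (take d v)" by (rule CH_take)
        moreover have "length (take d v) = d"
        proof -
          have "Suc d * 1 \<le> Suc d * L" using L by (intro mult_le_mono2) simp
          then have "d \<le> length v" using vl by simp
          then show ?thesis by simp
        qed
        moreover have "take d v \<in> T" using rt_take[OF tree vl(2)] .
        ultimately show ?thesis by blast
      qed
      then show "\<omega> \<in> {\<omega>\<in>space M. infinite (cone_cluster T (\<lambda>v. R v \<omega>))}"
        using sp cluster_inf_iff[OF tree] by blast
    qed
  qed
  finally show ?thesis .
qed

end


theorem corollary3:
  fixes T :: "nat list set" and p :: "nat pmf" and k :: nat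
    and M :: "'a measure" and R :: "nat list \<Rightarrow> 'a \<Rightarrow> nat" and D :: ereal
  assumes tree: "rooted_tree T"
    and sym: "spherically_symmetric T"
    and prob: "prob_space M"
    and indep: "prob_space.indep_vars M (\<lambda>_. count_space UNIV) R T"
    and distr: "\<forall>v\<in>T. distr M (count_space UNIV) (R v) = measure_pmf p"
    and p0: "0 < pmf p 0" "pmf p 0 < 1"
    and bounded: "measure_pmf.prob p {..k} = 1"
    and dim: "dim_inf_seq T \<longlonglongrightarrow> D"
    and cond: "D > ereal (ln (1 / (1 - (\<Prod>j=1..k. measure_pmf.prob p {..<j}))))"
  shows "measure M {\<omega> \<in> space M. infinite (cone_cluster T (\<lambda>v. R v \<omega>))} > 0"
proof -
  interpret cone_setting M T p k R
    using prob tree indep distr by (simp add: cone_setting_def cone_setting_axioms_def)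
  define F where "F j = measure_pmf.prob p {..j}" for j
  define q where "q = (\<Prod>j<k. F j)"
  have qeq: "(\<Prod>j=1..k. measure_pmf.prob p {..<j}) = q"
    unfolding q_def F_def by (simp add: prod.atLeast1_atMost_eq lessThan_Suc_atMost)
  have F0: "F 0 = pmf p 0" unfolding F_def by (simp add: measure_pmf_single[symmetric])
  have k1: "0 < k"
  proof (rule ccontr)
    assume "\<not> 0 < k" then have "k = 0" by simp
    then have "F 0 = 1" using bounded by (simp add: F_def)
    then show False using F0 p0 by simp
  qed
  have Fge: "F 0 \<le> F j" for j unfolding F_def by (rule measure_pmf.finite_measure_mono) auto
  have F1: "F j \<le> 1" for j unfolding F_def by simp
  have qpos: "0 < q" unfolding q_def using Fge F0 p0 by (intro prod_pos) (auto intro: less_le_trans)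
  have qlt: "q < 1"
  proof -
    obtain k' where k': "k = Suc k'" using k1 by (cases k) auto
    have "q = F 0 * (\<Prod>j<k'. F (Suc j))" unfolding q_def k' by (subst prod.lessThan_Suc_shift) simp
    also have "\<dots> \<le> F 0" using F1 Fge F0 p0
      by (intro mult_left_le prod_le_1) (auto intro: order.trans[OF less_imp_le[OF p0(1)]])
    finally show ?thesis using F0 p0 by simp
  qed
  define ell where "ell = ln (1 / (1 - q))"
  have "ereal ell < D" using cond qeq by (simp add: ell_def)
  then obtain D' where D': "ereal ell < ereal D'" "ereal D' < D" using ereal_dense2 by blast
  have lD: "ell < D'" using D'(1) by simp
  define xx where "xx = (1 - q) * exp D'"
  have xx1: "1 < xx"
  proof -
    have "exp ell < exp D'" using lD by simp
    moreover have "exp ell = 1 / (1 - q)" unfolding ell_def using qlt by simp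
    ultimately have "1 / (1 - q) < exp D'" by simp
    then show ?thesis unfolding xx_def using qlt by (simp add: field_simps)
  qed
  have "eventually (\<lambda>n. ereal D' < dim_inf_seq T n) sequentially"
    by (rule order_tendstoD(1)[OF dim D'(2)])
  then obtain n0 where n0: "\<And>n. n \<ge> n0 \<Longrightarrow> ereal D' < dim_inf_seq T n"
    unfolding eventually_sequentially by blast
  define n1 where "n1 = max n0 1"
  have growthN: "exp D' ^ n < real (card (lev T n))" if "n \<ge> n1" for n
  proof -
    have nn: "n \<ge> n0" "0 < n" using that by (auto simp: n1_def)
    have "[] \<in> T" using tree by (simp add: rooted_tree_def)
    then have "dim_inf_seq T n \<le> lnE (Mdesc T n []) / ereal (real n)"
      unfolding dim_inf_seq_def by (rule INF_lower)
    then have lt: "ereal D' < lnE (card (lev T n)) / ereal (real n)"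
      using n0[OF nn(1)] by (simp add: Mdesc_root)
    show ?thesis
    proof (cases "card (lev T n) = 0")
      case True
      then show ?thesis using lt nn by (simp add: lnE_def)
    next
      case False
      then have "D' < ln (real (card (lev T n))) / real n" using lt nn by (simp add: lnE_def)
      then have "real n * D' < ln (real (card (lev T n)))" using nn by (simp add: field_simps)
      then have "exp (real n * D') < real (card (lev T n))"
        using False by (metis exp_less_mono exp_ln of_nat_0_less_iff bot_nat_0.not_eq_extremum)
      then show ?thesis by (simp add: exp_of_nat_mult)
    qed
  qed
  define c0 where "c0 = (1 - pmf p 0) ^ k"
  have c0: "0 < c0" unfolding c0_def using p0 by simp
  obtain L0 where L0: "2 / c0 < xx ^ L0" using real_arch_pow[OF xx1] by blast
  define L where "L = max L0 n1"
  have Ln1: "n1 \<le> L" and L: "0 < L" by (auto simp: L_def n1_def)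
  have cxL: "2 \<le> c0 * xx ^ L"
  proof -
    have "xx ^ L0 \<le> xx ^ L" using xx1 by (intro power_increasing) (auto simp: L_def)
    then have "2 / c0 < xx ^ L" using L0 by simp
    then show ?thesis using c0 by (simp add: field_simps)
  qed
  have "lev T L \<noteq> {}"
  proof
    assume "lev T L = {}"
    then have "real (card (lev T L)) = 0" by simp
    moreover have "0 < exp D' ^ L" by simp
    ultimately show False using growthN[OF Ln1] by linarith
  qed
  then obtain v0 where v0: "v0 \<in> lev T L" by blast
  have v0T: "v0 \<in> T" "length v0 = L" using v0 by (auto simp: lev_def)
  have rho_eq: "prob {\<omega>\<in>space M. OPN L (\<lambda>j. R (take j v0) \<omega>)} = rho L"
    using Ev_prob[OF L v0T(1), of 0] v0T by (simp add: Ev_def blk_def)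
  have rlb: "c0 * (1 - q) ^ L \<le> rho L"
  proof -
    have inj: "inj_on (\<lambda>j. take j v0) {..<L}"
      by (rule inj_onI) (metis length_take lessThan_iff min.absorb4 v0T(2))
    have ind2: "indep_vars (\<lambda>_. count_space UNIV) (\<lambda>j. R (take j v0)) {..<L}"
      by (rule indep_vars_reindex[OF ind inj]) (use rt_take[OF tree v0T(1)] in auto)
    have "(1 - pmf p 0) ^ k * (1 - (\<Prod>j<k. measure_pmf.prob p {..j})) ^ L
        \<le> prob {\<omega>\<in>space M. OPN L (\<lambda>j. R (take j v0) \<omega>)}"
      by (rule path_open_lb[OF ind2 _ p0(2) bounded]) (use distr rt_take[OF tree v0T(1)] in auto)
    then show ?thesis using rho_eq by (simp add: c0_def q_def F_def)
  qed
  have rpos: "0 < rho L" using rlb c0 qlt by (smt (verit) mult_pos_pos zero_less_power)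
  have rle: "rho L \<le> 1" using rho_eq by (metis prob_le_1)
  have growth: "2 ^ m \<le> real (card (lev T (m * L))) * rho L ^ m" for m
  proof (cases "m = 0")
    case True
    have "lev T 0 = {[]}" using tree by (auto simp: lev_def rooted_tree_def)
    then show ?thesis using True by simp
  next
    case False
    then have "n1 \<le> m * L" using Ln1 by (metis le_trans mult_le_mono1 mult_1 not_gr0 Suc_leI One_nat_def)
    then have g1: "exp D' ^ (m * L) < real (card (lev T (m * L)))" by (rule growthN)
    have "(2::real) ^ m \<le> (c0 * xx ^ L) ^ m" using cxL by (intro power_mono) auto
    also have "\<dots> = (exp D' ^ L) ^ m * (c0 * (1 - q) ^ L) ^ m"
      unfolding xx_def by (simp only: power_mult_distrib mult_ac)
    also have "\<dots> \<le> real (card (lev T (m * L))) * rho L ^ m"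
    proof (rule mult_mono)
      show "(exp D' ^ L) ^ m \<le> real (card (lev T (m * L)))" using g1 by (simp add: power_mult[symmetric] mult.commute)
      show "(c0 * (1 - q) ^ L) ^ m \<le> rho L ^ m" using rlb c0 qlt by (intro power_mono) auto
      show "0 \<le> (c0 * (1 - q) ^ L) ^ m" using c0 qlt by simp
    qed auto
    finally show ?thesis .
  qed
  have "rho L / 2 \<le> prob {\<omega>\<in>space M. infinite (cone_cluster T (\<lambda>v. R v \<omega>))}"
    by (rule survive[OF L sym growth rpos rle])
  then show ?thesis using rpos by linarith
qed



end
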